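(* Consider the uncontrolled network SIS system $\dot x=(-D+B-XB)x$ and the controlled system $\dot x=(-D-H(x)+B-XB)x$, with $B$ irreducible and $s(-D+B)>0$, where $H(x)=\operatorname{diag}(h_1(x_1),\dots,h_n(x_n))$, each $h_i:[0,1]\to\mathbb{R}_{\ge0}$ is bounded, smooth, monotonically nondecreasing with $h_i(0)=0$, and there exists an index $j$ such that $h_j(s)>0$ for all $s\in(0,1]$. Let $x^*$ and $\bar x^*$ denote the unique endemic equilibria (in $\Xi_n\setminus\{0_n\}$) of the uncontrolled and controlled systems, respectively. Then $\bar x^*<x^*$ entrywise, i.e. $\bar x^*_i<x^*_i$ for every $i=1,\dots,n$.
   Context: $n\ge2$, $D=\operatorname{diag}(d_1,\dots,d_n)$ with $d_i>0$, $B=(b_{ij})\in\mathbb{R}^{n\times n}$ entrywise nonnegative and irreducible (equivalently, its directed graph is strongly connected), $X=\operatorname{diag}(x_1,\dots,x_n)$. $\Xi_n=[0,1]^n$. $s(M)$ denotes the largest real part of the eigenvalues of a square matrix $M$. (Under these hypotheses each system has exactly one equilibrium in $\Xi_n\setminus\{0_n\}$, lying in the interior of $\Xi_n$.) *)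

theory Defs
  imports "HOL-Analysis.Analysis"
begin

definition diag_mat :: "('a::zero)^'n \<Rightarrow> 'a^'n^'n" where
  "diag_mat v = (\<chi> i j. if i = j then v $ i else 0)"

definition cmat :: "real^'n^'n \<Rightarrow> complex^'n^'n" where
  "cmat M = (\<chi> i j. complex_of_real (M $ i $ j))"

definition spectral_abscissa :: "real^'n^'n \<Rightarrow> real" where
  "spectral_abscissa M = Max (Re ` {z. det (mat z - cmat M) = 0})"

text \<open>Irreducible nonnegative matrix: its directed graph (edge i -> j iff B_ij \<noteq> 0)
  is strongly connected.\<close>
definition irreducible_mat :: "real^'n^'n \<Rightarrow> bool" where
  "irreducible_mat B \<longleftrightarrow> (\<forall>i j. (i, j) \<in> {(i, j). B $ i $ j \<noteq> 0}\<^sup>*)"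

definition smooth_on :: "real set \<Rightarrow> (real \<Rightarrow> real) \<Rightarrow> bool" where
  "smooth_on S h \<longleftrightarrow> (\<exists>f :: nat \<Rightarrow> real \<Rightarrow> real. f 0 = h \<and>
     (\<forall>k. \<forall>x\<in>S. (f k has_real_derivative f (Suc k) x) (at x within S)))"

definition Xi :: "(real^'n) set" where
  "Xi = {x. \<forall>i. 0 \<le> x $ i \<and> x $ i \<le> 1}"

end

theory Submission imports Defs begin
lemma ent: "(diag_mat x ** B) $ i $ j = x$i * (B::real^'n^'n)$i$j"
proof -
  have e: "\<And>k. (diag_mat x)$i$k * B$k$j = (if k = i then x$i * B$i$j else 0)"
    by (simp add: diag_mat_def)
  show ?thesis unfolding matrix_matrix_mult_def by (simp only: vec_lambda_beta e) simp
qed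
lemma comp1: fixes d c x :: "real^'n" and B :: "real^'n^'n"
  shows "((- diag_mat d - diag_mat c + B - diag_mat x ** B) *v x) $ i
   = -(d$i + c$i) * x$i + (1 - x$i) * (\<Sum>j\<in>UNIV. B$i$j * x$j)"
proof -
  have e: "\<And>j. (- diag_mat d - diag_mat c + B - diag_mat x ** B) $ i $ j * x$j
     = (if j = i then -(d$i + c$i) * x$i else 0) + (1 - x$i) * (B$i$j * x$j)"
    by (simp add: ent) (auto simp: diag_mat_def algebra_simps)
  have "((- diag_mat d - diag_mat c + B - diag_mat x ** B) *v x) $ i
     = (\<Sum>j\<in>UNIV. (if j = i then -(d$i + c$i) * x$i else 0) + (1 - x$i) * (B$i$j * x$j))"
    unfolding matrix_vector_mult_def by (simp only: vec_lambda_beta e)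
  also have "\<dots> = -(d$i + c$i) * x$i + (1 - x$i) * (\<Sum>j\<in>UNIV. B$i$j * x$j)"
    by (simp add: sum.distrib sum_distrib_left)
  finally show ?thesis .
qed
lemma comp0: fixes d x :: "real^'n" and B :: "real^'n^'n"
  shows "((- diag_mat d + B - diag_mat x ** B) *v x) $ i
   = -(d$i) * x$i + (1 - x$i) * (\<Sum>j\<in>UNIV. B$i$j * x$j)"
proof -
  have "diag_mat (0::real^'n) = 0" by (simp add: diag_mat_def vec_eq_iff)
  then show ?thesis using comp1[of d 0 B x i] by simp
qed
lemma closed:
  assumes "irreducible_mat B" "k \<in> K" "\<forall>a\<in>K. \<forall>j. B$a$j \<noteq> 0 \<longrightarrow> j \<in> K"
  shows "j \<in> K"
proof -
  have "(k,j) \<in> {(i, j). B $ i $ j \<noteq> 0}\<^sup>*" using assms(1) unfolding irreducible_mat_def by blast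
  then show ?thesis
    by (induction rule: rtrancl_induct) (use assms in auto)
qed

lemma pos_eq:
  fixes x :: "real^'n" and B :: "real^'n^'n"
  assumes irr: "irreducible_mat B" and nn: "\<forall>i j. B $ i $ j \<ge> 0"
    and xm: "x \<in> Xi - {0}" and ep: "\<forall>i. e i > 0"
    and eq: "\<forall>i. e i * x$i = (1 - x$i) * (\<Sum>j\<in>UNIV. B$i$j * x$j)"
  shows "0 < x$i \<and> x$i < 1"
proof -
  have x01: "\<And>i. 0 \<le> x$i \<and> x$i \<le> 1" using xm by (auto simp: Xi_def)
  have cl: "\<forall>a\<in>{i. x$i = 0}. \<forall>j. B$a$j \<noteq> 0 \<longrightarrow> j \<in> {i. x$i = 0}"
  proof (intro ballI allI impI)
    fix a j assume a: "a \<in> {i. x$i = 0}" and b: "B$a$j \<noteq> 0"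
    have "(\<Sum>j\<in>UNIV. B$a$j * x$j) = 0" using eq[rule_format, of a] a by simp
    moreover have "\<forall>j\<in>UNIV. 0 \<le> B$a$j * x$j" using nn x01 by simp
    ultimately have "B$a$j * x$j = 0" using sum_nonneg_eq_0_iff[of UNIV "\<lambda>j. B$a$j * x$j"] by simp
    then show "j \<in> {i. x$i = 0}" using b by simp
  qed
  have "x$i \<noteq> 0"
  proof
    assume "x$i = 0"
    then have "\<forall>j. x$j = 0" using closed[OF irr _ cl] by blast
    then have "x = 0" by (simp add: vec_eq_iff)
    then show False using xm by simp
  qed
  moreover have "x$i \<noteq> 1"
  proof
    assume "x$i = 1"
    then have "e i * x$i = 0" using eq[rule_format, of i] by simp
    then show False using ep[rule_format, of i] `x$i = 1` by simp
  qed
  ultimately show ?thesis using x01[of i] by simp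
qed

theorem lemma5:
  fixes d :: "real^'n" and B :: "real^'n^'n" and h :: "'n \<Rightarrow> real \<Rightarrow> real"
    and xs xbar :: "real^'n"
  assumes n2: "CARD('n) \<ge> 2"
    and d_pos: "\<forall>i. d $ i > 0"
    and B_nonneg: "\<forall>i j. B $ i $ j \<ge> 0"
    and B_irr: "irreducible_mat B"
    and s_pos: "spectral_abscissa (- diag_mat d + B) > 0"
    and h_bdd: "\<forall>i. bounded (h i ` {0..1})"
    and h_nonneg: "\<forall>i. \<forall>s\<in>{0..1}. h i s \<ge> 0"
    and h_smooth: "\<forall>i. smooth_on {0..1} (h i)"
    and h_mono: "\<forall>i. mono_on {0..1} (h i)"
    and h_zero: "\<forall>i. h i 0 = 0"
    and h_pos: "\<exists>j. \<forall>s\<in>{0<..1}. h j s > 0"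
    and xs_mem: "xs \<in> Xi - {0}"
    and xs_eq: "(- diag_mat d + B - diag_mat xs ** B) *v xs = 0"
    and xbar_mem: "xbar \<in> Xi - {0}"
    and xbar_eq: "(- diag_mat d - diag_mat (\<chi> i. h i (xbar $ i)) + B - diag_mat xbar ** B) *v xbar = 0"
  shows "\<forall>i. xbar $ i < xs $ i"
proof -
  define S where "S i = (\<Sum>j\<in>UNIV. B$i$j * xs$j)" for i
  define Sb where "Sb i = (\<Sum>j\<in>UNIV. B$i$j * xbar$j)" for i
  define hb where "hb i = h i (xbar$i)" for i
  have eqs: "\<forall>i. d$i * xs$i = (1 - xs$i) * S i"
  proof
    fix i show "d$i * xs$i = (1 - xs$i) * S i"
      using arg_cong[OF xs_eq, of "\<lambda>v. v$i"] comp0[of d B xs i] unfolding S_def by simp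
  qed
  have xbar01: "\<And>i. 0 \<le> xbar$i \<and> xbar$i \<le> 1" using xbar_mem by (auto simp: Xi_def)
  have hb0: "\<And>i. hb i \<ge> 0" using h_nonneg xbar01 unfolding hb_def by auto
  have eqb: "\<forall>i. (d$i + hb i) * xbar$i = (1 - xbar$i) * Sb i"
  proof
    fix i show "(d$i + hb i) * xbar$i = (1 - xbar$i) * Sb i"
      using arg_cong[OF xbar_eq, of "\<lambda>v. v$i"] comp1[of d "\<chi> i. h i (xbar $ i)" B xbar i]
      unfolding Sb_def hb_def by (simp add: algebra_simps)
  qed
  have xsp: "\<And>i. 0 < xs$i \<and> xs$i < 1"
    using pos_eq[OF B_irr B_nonneg xs_mem, of "\<lambda>i. d$i"] d_pos eqs unfolding S_def by blast
  have xbp: "\<And>i. 0 < xbar$i \<and> xbar$i < 1"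
    using pos_eq[OF B_irr B_nonneg xbar_mem, of "\<lambda>i. d$i + hb i"] d_pos hb0 eqb unfolding Sb_def
    by (metis add_pos_nonneg)
  define r where "r i = xbar$i / xs$i" for i
  have "Max (range r) \<in> range r" by (rule Max_in) auto
  then obtain k where kk: "r k = Max (range r)" by (metis rangeE)
  have kmax: "\<forall>i. r i \<le> r k" unfolding kk by simp
  have le: "\<And>i. xbar$i \<le> xs$i"
  proof -
    have "r k \<le> 1"
    proof (rule ccontr)
      assume a1: "\<not> r k \<le> 1"
      let ?a = "r k"
      have bnd: "\<And>j. xbar$j \<le> ?a * xs$j"
        using kmax xsp unfolding r_def by (simp add: pos_divide_le_eq mult.commute)
      have xbk: "xbar$k = ?a * xs$k" using xsp[of k] unfolding r_def by simp
      have "Sb k \<le> ?a * S k" unfolding Sb_def S_def sum_distrib_left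
        by (rule sum_mono) (metis B_nonneg bnd mult.left_commute mult_left_mono)
      then have "(1 - xbar$k) * Sb k \<le> (1 - xbar$k) * (?a * S k)"
        using xbp[of k] by (intro mult_left_mono) auto
      then have "(d$k + hb k) * xbar$k * (1 - xs$k) \<le> (1 - xbar$k) * ?a * (S k * (1 - xs$k))"
      proof -
        have "(1 - xbar$k) * Sb k * (1 - xs$k) \<le> (1 - xbar$k) * (?a * S k) * (1 - xs$k)"
          using `(1 - xbar$k) * Sb k \<le> (1 - xbar$k) * (?a * S k)` xsp[of k]
          by (intro mult_right_mono) auto
        then show ?thesis using eqb[rule_format, of k] by (simp add: mult.assoc)
      qed
      also have "\<dots> = (1 - xbar$k) * (d$k * xbar$k)"
      proof -
        have "S k * (1 - xs$k) = d$k * xs$k" using eqs[rule_format, of k] by (simp add: mult.commute)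
        then show ?thesis using xbk by simp
      qed
      finally have "(d$k + hb k) * xbar$k * (1 - xs$k) \<le> (1 - xbar$k) * (d$k * xbar$k)" .
      moreover have "d$k * xbar$k * (1 - xs$k) \<le> (d$k + hb k) * xbar$k * (1 - xs$k)"
        using hb0[of k] xbp[of k] xsp[of k] by (intro mult_right_mono) auto
      ultimately have "(d$k * xbar$k) * (1 - xs$k) \<le> (d$k * xbar$k) * (1 - xbar$k)" by argo
      moreover have "d$k * xbar$k > 0" using d_pos xbp by simp
      ultimately have "1 - xs$k \<le> 1 - xbar$k" using mult_le_cancel_left_pos by blast
      then have "xbar$k \<le> xs$k" by simp
      moreover have "xbar$k > xs$k" using xbk a1 xsp[of k] by simp
      ultimately show False by simp
    qed
    fix i
    have "r i \<le> 1" using kmax `r k \<le> 1` by (meson order.trans)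
    then show "xbar$i \<le> xs$i" using xsp[of i] unfolding r_def by (simp add: pos_divide_le_eq)
  qed
  define K where "K = {i. xbar$i = xs$i}"
  have Kprop: "hb a = 0 \<and> (\<forall>j. B$a$j \<noteq> 0 \<longrightarrow> j \<in> K)" if aK: "a \<in> K" for a
  proof -
    have xa: "xbar$a = xs$a" using aK K_def by simp
    have Sle: "Sb a \<le> S a" unfolding Sb_def S_def
      by (rule sum_mono) (simp add: B_nonneg le mult_left_mono)
    have "(d$a + hb a) * xs$a = (1 - xs$a) * Sb a" using eqb xa by metis
    also have "\<dots> \<le> (1 - xs$a) * S a" using Sle xsp[of a] by (intro mult_left_mono) auto
    also have "\<dots> = d$a * xs$a" using eqs by metis
    finally have f1: "hb a * xs$a \<le> 0" by (simp add: algebra_simps)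
    then have hz: "hb a = 0" using hb0[of a] xsp[of a]
      by (smt (verit) mult_pos_pos)
    have "(1 - xs$a) * Sb a = (1 - xs$a) * S a" using eqb eqs xa hz by (metis add_0_right)
    then have "Sb a = S a" using xsp[of a] by simp
    then have "(\<Sum>j\<in>UNIV. B$a$j * (xs$j - xbar$j)) = 0"
      unfolding Sb_def S_def by (simp add: algebra_simps sum_subtractf)
    moreover have "\<forall>j\<in>UNIV. 0 \<le> B$a$j * (xs$j - xbar$j)" using B_nonneg le by simp
    ultimately have z: "\<And>j. B$a$j * (xs$j - xbar$j) = 0"
      using sum_nonneg_eq_0_iff[of UNIV "\<lambda>j. B$a$j * (xs$j - xbar$j)"] by simp
    have "\<forall>j. B$a$j \<noteq> 0 \<longrightarrow> j \<in> K"
    proof (intro allI impI)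
      fix j assume "B$a$j \<noteq> 0"
      then have "xs$j - xbar$j = 0" using z[of j] by simp
      then show "j \<in> K" unfolding K_def by simp
    qed
    then show ?thesis using hz by simp
  qed
  have "K = {}"
  proof (rule ccontr)
    assume "K \<noteq> {}"
    then obtain a where a: "a \<in> K" by blast
    have all: "\<And>j. j \<in> K" using closed[OF B_irr a] Kprop by blast
    obtain j where j: "\<forall>s\<in>{0<..1}. h j s > 0" using h_pos by blast
    have "hb j > 0" using j xbp[of j] unfolding hb_def by simp
    then show False using Kprop[OF all[of j]] by simp
  qed
  show ?thesis
  proof
    fix i
    have "xbar$i \<noteq> xs$i" using `K = {}` unfolding K_def by auto
    then show "xbar$i < xs$i" using le[of i] by simp
  qed
qed
end
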